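(* Let $F$ be a Boolean formula over $n$ variables and $m\ge1$. If $|\mathrm{Sol}(F)|\ge 2^{m+3}$, then $\varphi^F_{holes}(m)$ is true.
   Context: $\mathrm{Sol}(F)\subseteq\{0,1\}^n$ is the set of satisfying assignments of $F$. $\mathcal{H}(n,m,2)$ is a fixed explicit pairwise independent family of hash functions $\{0,1\}^n\to\{0,1\}^m$: for $h$ uniform in the family, distinct $y_1,y_2$ and any $\alpha_1,\alpha_2\in\{0,1\}^m$, $\Pr[h(y_1)=\alpha_1\wedge h(y_2)=\alpha_2]=2^{-2m}$. The formula $\varphi^F_{holes}(m)$ is $\exists h_1,\dots,h_{m+1}\in\mathcal{H}(n,m,2)\ \forall\alpha\in\{0,1\}^m\ \exists z\in\{0,1\}^n:\ \bigvee_{i=1}^{m+1}(F(z)\wedge h_i(z)=\alpha)$, i.e. every $\alpha\in\{0,1\}^m$ is the image of some solution of $F$ under some $h_i$. *)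

theory Defs
  imports Complex_Main
begin

definition cube :: "nat \<Rightarrow> bool list set" where
  "cube k = {xs. length xs = k}"

datatype bform = Var nat | Tru | Fls | Neg bform | Conj bform bform | Disj bform bform

fun beval :: "bform \<Rightarrow> bool list \<Rightarrow> bool" where
  "beval (Var i) x = x ! i"
| "beval Tru x = True"
| "beval Fls x = False"
| "beval (Neg f) x = (\<not> beval f x)"
| "beval (Conj f g) x = (beval f x \<and> beval g x)"
| "beval (Disj f g) x = (beval f x \<or> beval g x)"

fun bvars :: "bform \<Rightarrow> nat set" where
  "bvars (Var i) = {i}"
| "bvars Tru = {}"
| "bvars Fls = {}"
| "bvars (Neg f) = bvars f"
| "bvars (Conj f g) = bvars f \<union> bvars g"
| "bvars (Disj f g) = bvars f \<union> bvars g"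

definition formula_over :: "nat \<Rightarrow> bform \<Rightarrow> bool" where
  "formula_over n F \<longleftrightarrow> bvars F \<subseteq> {..<n}"

definition Sol :: "nat \<Rightarrow> bform \<Rightarrow> bool list set" where
  "Sol n F = {z \<in> cube n. beval F z}"

text \<open>H is a pairwise independent family of hash functions {0,1}^n \<rightarrow> {0,1}^m,
  with h drawn uniformly from H: for distinct y1, y2 in {0,1}^n and any
  a1, a2 in {0,1}^m, Pr[h y1 = a1 \<and> h y2 = a2] = 2^(-2m).\<close>
definition pairwise_indep_family ::
  "nat \<Rightarrow> nat \<Rightarrow> (bool list \<Rightarrow> bool list) set \<Rightarrow> bool" where
  "pairwise_indep_family n m H \<longleftrightarrow>
     finite H \<and> H \<noteq> {} \<and>
     (\<forall>h\<in>H. \<forall>y\<in>cube n. h y \<in> cube m) \<and>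
     (\<forall>y1\<in>cube n. \<forall>y2\<in>cube n. \<forall>a1\<in>cube m. \<forall>a2\<in>cube m. y1 \<noteq> y2 \<longrightarrow>
        real (card {h\<in>H. h y1 = a1 \<and> h y2 = a2}) / real (card H) = 1 / 2 ^ (2 * m))"

definition phi_holes ::
  "nat \<Rightarrow> (bool list \<Rightarrow> bool list) set \<Rightarrow> bform \<Rightarrow> nat \<Rightarrow> bool" where
  "phi_holes n H F m \<longleftrightarrow>
     (\<exists>hs :: nat \<Rightarrow> (bool list \<Rightarrow> bool list). (\<forall>i\<in>{1..m+1}. hs i \<in> H) \<and>
        (\<forall>a\<in>cube m. \<exists>z\<in>cube n. \<exists>i\<in>{1..m+1}. beval F z \<and> hs i z = a))"

end

theory Submission
  imports Defs
begin

lemma card_cube: "card (cube k) = 2 ^ k"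
proof -
  have "card {xs. set xs \<subseteq> (UNIV::bool set) \<and> length xs = k} = (card (UNIV::bool set))^k"
    by (rule card_lists_length_eq) simp
  thus ?thesis by (simp add: cube_def)
qed

lemma finite_cube: "finite (cube k)"
  by (simp add: cube_def finite_list_length)

lemma cheb:
  fixes H :: "'h set" and S :: "'y set" and P :: "'h \<Rightarrow> 'y \<Rightarrow> bool" and p :: real
  assumes fH: "finite H" and fS: "finite S"
    and m1: "\<forall>y\<in>S. real (card {h\<in>H. P h y}) = real (card H) * p"
    and m2: "\<forall>y1\<in>S. \<forall>y2\<in>S. y1 \<noteq> y2 \<longrightarrow> real (card {h\<in>H. P h y1 \<and> P h y2}) = real (card H) * p^2"
    and p0: "p \<ge> 0"
  shows "real (card {h\<in>H. \<forall>y\<in>S. \<not> P h y}) * (real (card S) * p)^2 \<le> real (card H) * real (card S) * p"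
proof -
  define X where "X h = (\<Sum>y\<in>S. if P h y then 1 else 0 :: real)" for h
  define N where "N = real (card H)"
  define s where "s = real (card S)"
  have cnt: "real (card {h\<in>H. Q h}) = (\<Sum>h\<in>H. if Q h then 1 else 0)" for Q
  proof -
    have "real (card {h\<in>H. Q h}) = (\<Sum>h\<in>{h\<in>H. Q h}. 1)" by simp
    also have "\<dots> = (\<Sum>h\<in>H. if Q h then 1 else 0)" by (rule sum.inter_filter[OF fH])
    finally show ?thesis .
  qed
  have sum1: "(\<Sum>h\<in>H. X h) = N * s * p"
  proof -
    have "(\<Sum>h\<in>H. X h) = (\<Sum>y\<in>S. \<Sum>h\<in>H. if P h y then 1 else 0)"
      unfolding X_def by (rule sum.swap)
    also have "\<dots> = (\<Sum>y\<in>S. N * p)"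
      by (rule sum.cong) (use m1 cnt in \<open>auto simp: N_def\<close>)
    finally show ?thesis by (simp add: s_def)
  qed
  have inner: "(\<Sum>y2\<in>S. real (card {h\<in>H. P h y1 \<and> P h y2})) = N * p + (s - 1) * N * p^2"
    if y1: "y1 \<in> S" for y1
  proof -
    have "(\<Sum>y2\<in>S. real (card {h\<in>H. P h y1 \<and> P h y2})) =
       real (card {h\<in>H. P h y1 \<and> P h y1}) + (\<Sum>y2\<in>S-{y1}. real (card {h\<in>H. P h y1 \<and> P h y2}))"
      by (rule sum.remove[OF fS y1])
    also have "(\<Sum>y2\<in>S-{y1}. real (card {h\<in>H. P h y1 \<and> P h y2})) = (\<Sum>y2\<in>S-{y1}. N * p^2)"
      by (rule sum.cong) (use m2 y1 in \<open>auto simp: N_def\<close>)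
    also have "\<dots> = (s - 1) * N * p^2"
    proof -
      have "card S \<ge> 1" using y1 fS card_gt_0_iff by (metis One_nat_def Suc_leI empty_iff)
      thus ?thesis using y1 fS by (simp add: s_def card_Diff_singleton of_nat_diff)
    qed
    finally show ?thesis using m1 y1 by (simp add: N_def)
  qed
  have sum2: "(\<Sum>h\<in>H. (X h)^2) = s * (N * p + (s - 1) * N * p^2)"
  proof -
    have "(\<Sum>h\<in>H. (X h)^2) = (\<Sum>h\<in>H. \<Sum>y1\<in>S. \<Sum>y2\<in>S. if P h y1 \<and> P h y2 then 1 else 0)"
      unfolding X_def power2_eq_square sum_product by (intro sum.cong refl) auto
    also have "\<dots> = (\<Sum>y1\<in>S. \<Sum>h\<in>H. \<Sum>y2\<in>S. if P h y1 \<and> P h y2 then 1 else 0)"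
      by (rule sum.swap)
    also have "\<dots> = (\<Sum>y1\<in>S. \<Sum>y2\<in>S. \<Sum>h\<in>H. if P h y1 \<and> P h y2 then 1 else 0)"
      by (rule sum.cong[OF refl], rule sum.swap)
    also have "\<dots> = (\<Sum>y1\<in>S. \<Sum>y2\<in>S. real (card {h\<in>H. P h y1 \<and> P h y2}))"
      by (simp add: cnt)
    also have "\<dots> = (\<Sum>y1\<in>S. N * p + (s - 1) * N * p^2)"
      by (rule sum.cong[OF refl]) (rule inner)
    finally show ?thesis by (simp add: s_def)
  qed
  have var: "(\<Sum>h\<in>H. (X h - s * p)^2) = N * s * p - N * s * p^2"
  proof -
    have "(\<Sum>h\<in>H. (X h - s * p)^2) = (\<Sum>h\<in>H. (X h)^2) - 2 * s * p * (\<Sum>h\<in>H. X h) + N * (s*p)^2"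
    proof -
      have "(\<Sum>h\<in>H. (X h - s * p)^2) = (\<Sum>h\<in>H. (X h)^2 - (2 * s * p) * X h + (s*p)^2)"
        by (rule sum.cong) (auto simp: power2_diff algebra_simps)
      also have "\<dots> = (\<Sum>h\<in>H. (X h)^2) - (\<Sum>h\<in>H. (2 * s * p) * X h) + (\<Sum>h\<in>H. (s*p)^2)"
        by (simp add: sum.distrib sum_subtractf)
      finally show ?thesis by (simp add: sum_distrib_left[symmetric] N_def)
    qed
    thus ?thesis using sum1 sum2 by (simp add: algebra_simps power2_eq_square)
  qed
  define Z where "Z = {h\<in>H. \<forall>y\<in>S. \<not> P h y}"
  have "real (card Z) * (s * p)^2 = (\<Sum>h\<in>Z. (X h - s * p)^2)"
    by (simp add: Z_def X_def)
  also have "\<dots> \<le> (\<Sum>h\<in>H. (X h - s * p)^2)"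
    by (rule sum_mono2[OF fH]) (auto simp: Z_def)
  also have "\<dots> \<le> N * s * p" using var p0 by (simp add: N_def s_def)
  finally show ?thesis by (simp add: Z_def N_def s_def)
qed


lemma greedy:
  fixes H :: "'h set" and B :: "'a \<Rightarrow> 'h set"
  assumes fH: "finite H" and ne: "H \<noteq> {}"
    and bad: "\<forall>a\<in>A. B a \<subseteq> H \<and> 2 * card (B a) \<le> card H"
  shows "\<forall>U. U \<subseteq> A \<longrightarrow> finite U \<longrightarrow> card U < 2 ^ k \<longrightarrow>
     (\<exists>hs. (\<forall>i\<in>{1..k}. hs i \<in> H) \<and> (\<forall>a\<in>U. \<exists>i\<in>{1..k}. hs i \<notin> B a))"
proof (induction k)
  case 0
  then show ?case using ne by auto
next
  case (Suc k)
  show ?case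
  proof (intro allI impI)
    fix U assume UA: "U \<subseteq> A" and fU: "finite U" and cU: "card U < 2 ^ Suc k"
    have "(\<Sum>h\<in>H. real (card {a\<in>U. h \<in> B a})) \<le> real (card U) / 2 * real (card H)"
    proof -
      have "(\<Sum>h\<in>H. real (card {a\<in>U. h \<in> B a})) = (\<Sum>h\<in>H. \<Sum>a\<in>U. if h \<in> B a then 1 else 0)"
        by (rule sum.cong[OF refl]) (simp add: sum.inter_filter[OF fU, symmetric])
      also have "\<dots> = (\<Sum>a\<in>U. \<Sum>h\<in>H. if h \<in> B a then 1 else 0)" by (rule sum.swap)
      also have "\<dots> = (\<Sum>a\<in>U. real (card (B a)))"
      proof (rule sum.cong[OF refl])
        fix a assume "a \<in> U"
        hence "B a \<subseteq> H" using UA bad by auto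
        hence "{h\<in>H. h \<in> B a} = B a" by auto
        thus "(\<Sum>h\<in>H. if h \<in> B a then 1 else 0) = real (card (B a))"
          using sum.inter_filter[OF fH, of "\<lambda>_. 1::real" "\<lambda>h. h \<in> B a"] by simp
      qed
      also have "\<dots> \<le> (\<Sum>a\<in>U. real (card H) / 2)"
      proof (rule sum_mono)
        fix a assume "a \<in> U"
        hence "2 * card (B a) \<le> card H" using UA bad by auto
        hence "2 * real (card (B a)) \<le> real (card H)" by linarith
        thus "real (card (B a)) \<le> real (card H) / 2" by simp
      qed
      finally show ?thesis by simp
    qed
    then obtain h where hH: "h \<in> H" and hle: "real (card {a\<in>U. h \<in> B a}) \<le> real (card U) / 2"
    proof -
      assume r: "\<And>h. h \<in> H \<Longrightarrow> real (card {a\<in>U. h \<in> B a}) \<le> real (card U) / 2 \<Longrightarrow> thesis"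
      show thesis
      proof (rule ccontr)
        assume "\<not> thesis"
        hence lt: "real (card U) / 2 < real (card {a\<in>U. h \<in> B a})" if "h \<in> H" for h
          using r[OF that] by linarith
        have "(\<Sum>h\<in>H. real (card U) / 2) < (\<Sum>h\<in>H. real (card {a\<in>U. h \<in> B a}))"
          by (rule sum_strict_mono[OF fH ne]) (rule lt)
        thus False using \<open>(\<Sum>h\<in>H. real (card {a\<in>U. h \<in> B a})) \<le> real (card U) / 2 * real (card H)\<close>
          by (simp add: mult.commute)
      qed
    qed
    define U' where "U' = {a\<in>U. h \<in> B a}"
    have "real (card U) < 2 * 2 ^ k" using cU
      by (metis of_nat_less_iff of_nat_numeral of_nat_power power_Suc)
    hence "real (card U') < 2 ^ k" using hle unfolding U'_def by linarith
    hence "card U' < (2::nat) ^ k"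
      by (metis of_nat_less_iff of_nat_numeral of_nat_power)
    moreover have "U' \<subseteq> A" "finite U'" using UA fU by (auto simp: U'_def)
    ultimately obtain hs where hs1: "\<forall>i\<in>{1..k}. hs i \<in> H"
        and hs2: "\<forall>a\<in>U'. \<exists>i\<in>{1..k}. hs i \<notin> B a"
      using Suc.IH by blast
    define hs' where "hs' = hs(Suc k := h)"
    have "\<forall>i\<in>{1..Suc k}. hs' i \<in> H" using hs1 hH by (auto simp: hs'_def)
    moreover have "\<forall>a\<in>U. \<exists>i\<in>{1..Suc k}. hs' i \<notin> B a"
    proof
      fix a assume aU: "a \<in> U"
      show "\<exists>i\<in>{1..Suc k}. hs' i \<notin> B a"
      proof (cases "h \<in> B a")
        case True
        then obtain i where "i \<in> {1..k}" "hs i \<notin> B a" using hs2 aU by (auto simp: U'_def)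
        thus ?thesis by (intro bexI[of _ i]) (auto simp: hs'_def)
      next
        case False
        thus ?thesis by (intro bexI[of _ "Suc k"]) (auto simp: hs'_def)
      qed
    qed
    ultimately show "\<exists>hs. (\<forall>i\<in>{1..Suc k}. hs i \<in> H) \<and> (\<forall>a\<in>U. \<exists>i\<in>{1..Suc k}. hs i \<notin> B a)"
      by blast
  qed
qed


lemma marginal:
  assumes pw: "pairwise_indep_family n m H"
    and two: "2 \<le> card (cube n)"
    and y: "y \<in> cube n" and a: "a \<in> cube m"
  shows "real (card {h\<in>H. h y = a}) = real (card H) / 2 ^ m"
proof -
  have fH: "finite H" and rng: "\<forall>h\<in>H. \<forall>y\<in>cube n. h y \<in> cube m"
    and pr: "\<forall>y1\<in>cube n. \<forall>y2\<in>cube n. \<forall>a1\<in>cube m. \<forall>a2\<in>cube m. y1 \<noteq> y2 \<longrightarrow>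
        real (card {h\<in>H. h y1 = a1 \<and> h y2 = a2}) / real (card H) = 1 / 2 ^ (2 * m)"
    and ne: "H \<noteq> {}"
    using pw unfolding pairwise_indep_family_def by auto
  have Hpos: "real (card H) > 0" using fH ne by (simp add: card_gt_0_iff)
  obtain y2 where y2: "y2 \<in> cube n" "y2 \<noteq> y"
  proof -
    have "cube n - {y} \<noteq> {}"
    proof
      assume "cube n - {y} = {}"
      hence "cube n \<subseteq> {y}" by auto
      hence "card (cube n) \<le> card {y}" by (intro card_mono) auto
      hence "card (cube n) \<le> 1" by simp
      thus False using two by simp
    qed
    thus thesis using that by auto
  qed
  have eq: "{h\<in>H. h y = a} = (\<Union>a2\<in>cube m. {h\<in>H. h y = a \<and> h y2 = a2})"
    using rng y2 by auto
  have "card {h\<in>H. h y = a} = (\<Sum>a2\<in>cube m. card {h\<in>H. h y = a \<and> h y2 = a2})"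
    unfolding eq by (rule card_UN_disjoint) (auto simp: finite_cube fH)
  hence "real (card {h\<in>H. h y = a}) = (\<Sum>a2\<in>cube m. real (card {h\<in>H. h y = a \<and> h y2 = a2}))"
    by simp
  also have "\<dots> = (\<Sum>a2\<in>cube m. real (card H) / 2 ^ (2 * m))"
  proof (rule sum.cong[OF refl])
    fix a2 assume "a2 \<in> cube m"
    hence "real (card {h\<in>H. h y = a \<and> h y2 = a2}) / real (card H) = 1 / 2 ^ (2 * m)"
      using pr y y2 a by auto
    thus "real (card {h\<in>H. h y = a \<and> h y2 = a2}) = real (card H) / 2 ^ (2 * m)"
      using Hpos by (simp add: field_simps)
  qed
  also have "\<dots> = 2 ^ m * (real (card H) / 2 ^ (2 * m))" by (simp add: card_cube)
  also have "\<dots> = real (card H) / 2 ^ m"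
  proof -
    have "(2::real) ^ (2 * m) = 2 ^ m * 2 ^ m" by (simp add: mult_2 power_add)
    thus ?thesis by simp
  qed
  finally show ?thesis .
qed

theorem lemma5p2:
  fixes n m :: nat and F :: bform and H :: "(bool list \<Rightarrow> bool list) set"
  assumes "formula_over n F"
    and "pairwise_indep_family n m H"
    and "m \<ge> 1"
    and "card (Sol n F) \<ge> 2 ^ (m + 3)"
  shows "phi_holes n H F m"
proof -
  define S where "S = Sol n F"
  have SC: "S \<subseteq> cube n" by (auto simp: S_def Sol_def)
  have fS: "finite S" using SC finite_cube finite_subset by blast
  have fH: "finite H" and ne: "H \<noteq> {}" and rng: "\<forall>h\<in>H. \<forall>y\<in>cube n. h y \<in> cube m"
    and pr: "\<forall>y1\<in>cube n. \<forall>y2\<in>cube n. \<forall>a1\<in>cube m. \<forall>a2\<in>cube m. y1 \<noteq> y2 \<longrightarrow>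
        real (card {h\<in>H. h y1 = a1 \<and> h y2 = a2}) / real (card H) = 1 / 2 ^ (2 * m)"
    using assms(2) unfolding pairwise_indep_family_def by auto
  have Hpos: "real (card H) > 0" using fH ne by (simp add: card_gt_0_iff)
  have sbig: "card S \<ge> 2 ^ (m + 3)" using assms(4) by (simp add: S_def)
  have "(2::nat) ^ 1 \<le> 2 ^ (m + 3)" by (rule power_increasing) auto
  hence "(2::nat) \<le> 2 ^ (m + 3)" by simp
  hence two: "2 \<le> card (cube n)" using sbig card_mono[OF finite_cube SC] by linarith
  define p :: real where "p = 1 / 2 ^ m"
  define B where "B a = {h\<in>H. \<forall>y\<in>S. \<not> h y = a}" for a
  have bad: "\<forall>a\<in>cube m. B a \<subseteq> H \<and> 2 * card (B a) \<le> card H"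
  proof
    fix a assume a: "a \<in> cube m"
    have m1: "\<forall>y\<in>S. real (card {h\<in>H. h y = a}) = real (card H) * p"
      using marginal[OF assms(2) two _ a] SC by (auto simp: p_def)
    have m2: "\<forall>y1\<in>S. \<forall>y2\<in>S. y1 \<noteq> y2 \<longrightarrow> real (card {h\<in>H. h y1 = a \<and> h y2 = a}) = real (card H) * p^2"
    proof (intro ballI impI)
      fix y1 y2 assume "y1 \<in> S" "y2 \<in> S" "y1 \<noteq> y2"
      hence "real (card {h\<in>H. h y1 = a \<and> h y2 = a}) / real (card H) = 1 / 2 ^ (2 * m)"
        using pr SC a by (meson subsetD)
      thus "real (card {h\<in>H. h y1 = a \<and> h y2 = a}) = real (card H) * p^2"
        using Hpos by (simp add: p_def field_simps power_mult power2_eq_square mult_2 power_add)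
    qed
    have c: "real (card (B a)) * (real (card S) * p)^2 \<le> real (card H) * real (card S) * p"
      unfolding B_def by (rule cheb[OF fH fS m1 m2]) (simp add: p_def)
    have "real (card S) \<ge> 2 ^ (m+3)" using sbig
      by (metis of_nat_le_iff of_nat_numeral of_nat_power)
    hence sp: "real (card S) * p \<ge> 8" by (simp add: p_def power_add field_simps)
    have "real (card (B a)) * 8 * (real (card S) * p) \<le> real (card (B a)) * (real (card S) * p)^2"
    proof -
      have "8 * (real (card S) * p) \<le> (real (card S) * p) * (real (card S) * p)"
        using sp by (intro mult_right_mono) auto
      hence "real (card (B a)) * (8 * (real (card S) * p)) \<le> real (card (B a)) * ((real (card S) * p) * (real (card S) * p))"
        by (intro mult_left_mono) auto
      thus ?thesis by (simp add: power2_eq_square mult.assoc)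
    qed
    hence "real (card (B a)) * 8 * (real (card S) * p) \<le> real (card H) * (real (card S) * p)"
      using c by (simp add: mult.assoc mult.commute mult.left_commute)
    hence "real (card (B a)) * 8 \<le> real (card H)" using sp
      by (simp add: mult_le_cancel_right_pos)
    hence "2 * card (B a) \<le> card H" by linarith
    thus "B a \<subseteq> H \<and> 2 * card (B a) \<le> card H" by (auto simp: B_def)
  qed
  have "card (cube m) < 2 ^ (m + 1)" by (simp add: card_cube)
  then obtain hs where hs1: "\<forall>i\<in>{1..m+1}. hs i \<in> H"
      and hs2: "\<forall>a\<in>cube m. \<exists>i\<in>{1..m+1}. hs i \<notin> B a"
    using greedy[OF fH ne bad, of "m+1"] finite_cube by blast
  show ?thesis unfolding phi_holes_def
  proof (intro exI conjI ballI)
    fix i assume "i \<in> {1..m+1}" thus "hs i \<in> H" using hs1 by blast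
  next
    fix a assume "a \<in> cube m"
    then obtain i where i: "i \<in> {1..m+1}" "hs i \<notin> B a" using hs2 by blast
    then obtain y where "y \<in> S" "hs i y = a" using hs1 by (auto simp: B_def)
    thus "\<exists>z\<in>cube n. \<exists>i\<in>{1..m+1}. beval F z \<and> hs i z = a"
      using i unfolding S_def Sol_def by blast
  qed
qed

end
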